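(* Let $\tau$ and $\bar\tau$ be i.i.d. nonnegative random variables with $0<\mathbb{E}[\tau^2]<\infty$. For a threshold $\gamma\ge0$ define $$\mathbb{E}[L](\gamma)=\mathbb{E}\big[[\gamma-\bar\tau]^+\big]+\mathbb{E}[\tau],$$ $$\mathbb{E}[Q](\gamma)=\mathbb{E}\big[\bar\tau\,[\gamma-\bar\tau]^+\big]+(\mathbb{E}[\tau])^2+\tfrac12\,\mathbb{E}\Big[\big([\gamma-\bar\tau]^++\tau\big)^2\Big],$$ where $[x]^+=\max(x,0)$. For $\eta\ge0$ let $$q(\eta)=\min_{\gamma\ge0}\big(\mathbb{E}[Q](\gamma)-\eta\,\mathbb{E}[L](\gamma)\big).$$ Then: 1. At every $\gamma$ at which $\mathbb{P}(\tau\le\gamma)$ is continuous, $\frac{d\mathbb{E}[Q]}{d\gamma}=(\gamma+\mathbb{E}[\tau])\,\mathbb{P}(\tau\le\gamma)$ and $\frac{d\mathbb{E}[L]}{d\gamma}=\mathbb{P}(\tau\le\gamma)$. 2. For every $\gamma\ge0$, $\mathbb{E}[Q](\gamma)-\mathbb{E}[\tau]\,\mathbb{E}[L](\gamma)=\mathbb{E}\big[\bar\tau[\gamma-\bar\tau]^+\big]+\tfrac12\mathbb{E}\big[([\gamma-\bar\tau]^+)^2\big]+\tfrac12\mathbb{E}[\tau^2]>0$; in particular $q(\mathbb{E}[\tau])>0$. 3. The equation $q(\eta)=0$ has a unique solution $\eta^*$, which satisfies $\eta^*>\mathbb{E}[\tau]$. The threshold $\gamma^*=\eta^*-\mathbb{E}[\tau]$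 is strictly positive and minimizes $\mathbb{E}[Q](\gamma)/\mathbb{E}[L](\gamma)$ over $\gamma\ge0$.
   Context: Interpretation: $\tau$ is the service time and $\bar\tau$ is the service time of the previous update. The waiting policy waits $[\gamma-\bar\tau]^+$ before sampling. $\mathbb{E}[Q]/\mathbb{E}[L]$ is the resulting long-term average age of information. *)

theory Defs
  imports "HOL-Probability.Probability"
begin

definition pplus :: "real \<Rightarrow> real" where
  "pplus x = max x 0"

definition EL :: "'a measure \<Rightarrow> ('a \<Rightarrow> real) \<Rightarrow> ('a \<Rightarrow> real) \<Rightarrow> real \<Rightarrow> real" where
  "EL M tau taub g = (\<integral>x. pplus (g - taub x) \<partial>M) + (\<integral>x. tau x \<partial>M)"

definition EQ :: "'a measure \<Rightarrow> ('a \<Rightarrow> real) \<Rightarrow> ('a \<Rightarrow> real) \<Rightarrow> real \<Rightarrow> real" where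
  "EQ M tau taub g = (\<integral>x. taub x * pplus (g - taub x) \<partial>M) + (\<integral>x. tau x \<partial>M)^2
      + (1/2) * (\<integral>x. (pplus (g - taub x) + tau x)^2 \<partial>M)"

definition qfun :: "'a measure \<Rightarrow> ('a \<Rightarrow> real) \<Rightarrow> ('a \<Rightarrow> real) \<Rightarrow> real \<Rightarrow> real" where
  "qfun M tau taub eta = (INF g\<in>{0..}. EQ M tau taub g - eta * EL M tau taub g)"

end

theory Submission
  imports Defs
begin

lemma pplus_meas[measurable]: "pplus \<in> borel_measurable borel"
  unfolding pplus_def by measurable

lemma sq_bound: "((a::real) + b)^2 \<le> 2*a^2 + 2*b^2"
proof -
  have "0 \<le> (a-b)^2" by simp
  then show ?thesis by (simp add: power2_eq_square algebra_simps)
qed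

locale aoi = prob_space M for M :: "'a measure" +
  fixes tau taub :: "'a \<Rightarrow> real"
  assumes mt[measurable]: "tau \<in> borel_measurable M" and mb[measurable]: "taub \<in> borel_measurable M"
    and ind: "indep_var borel tau borel taub"
    and dst: "distr M borel tau = distr M borel taub"
    and nn0: "AE x in M. tau x \<ge> 0" and nnb: "AE x in M. taub x \<ge> 0"
    and int2: "integrable M (\<lambda>x. (tau x)^2)"
    and pos: "(\<integral>x. (tau x)^2 \<partial>M) > 0"
begin

lemma int2b: "integrable M (\<lambda>x. (taub x)^2)"
proof -
  have "integrable (distr M borel tau) (\<lambda>t. t^2)"
    using int2 by (subst integrable_distr_eq) auto
  then have "integrable (distr M borel taub) (\<lambda>t. t^2)" using dst by simp
  then show ?thesis by (subst (asm) integrable_distr_eq) auto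
qed

lemma int_t: "integrable M tau"
  by (rule square_integrable_imp_integrable[OF mt int2])

lemma int_b: "integrable M taub"
  by (rule square_integrable_imp_integrable[OF mb int2b])

lemma m_eq: "(\<integral>x. taub x \<partial>M) = (\<integral>x. tau x \<partial>M)"
proof -
  have "(\<integral>x. tau x \<partial>M) = (\<integral>t. t \<partial>distr M borel tau)" by (subst integral_distr) auto
  also have "\<dots> = (\<integral>t. t \<partial>distr M borel taub)" using dst by simp
  also have "\<dots> = (\<integral>x. taub x \<partial>M)" by (subst integral_distr) auto
  finally show ?thesis by simp
qed

lemma cdf_eq: "measure M {x\<in>space M. taub x \<le> s} = measure M {x\<in>space M. tau x \<le> s}"
proof -
  have "measure M {x\<in>space M. tau x \<le> s} = measure (distr M borel tau) {..s}"
    by (subst measure_distr) (auto simp: vimage_def Int_def conj_commute)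
  also have "\<dots> = measure (distr M borel taub) {..s}" using dst by simp
  also have "\<dots> = measure M {x\<in>space M. taub x \<le> s}"
    by (subst measure_distr) (auto simp: vimage_def Int_def conj_commute)
  finally show ?thesis by simp
qed

lemma int_p: fixes g :: real shows "integrable M (\<lambda>x. pplus (g - taub x))"
proof (rule Bochner_Integration.integrable_bound[of _ "\<lambda>x. \<bar>g\<bar> + \<bar>taub x\<bar>"])
  show "integrable M (\<lambda>x. \<bar>g\<bar> + \<bar>taub x\<bar>)" using int_b by auto
qed (auto simp: pplus_def)

lemma int_bp: fixes g :: real shows "integrable M (\<lambda>x. taub x * pplus (g - taub x))"
proof (rule Bochner_Integration.integrable_bound[of _ "\<lambda>x. \<bar>g\<bar> * \<bar>taub x\<bar> + (taub x)^2"])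
  show "integrable M (\<lambda>x. \<bar>g\<bar> * \<bar>taub x\<bar> + (taub x)^2)" using int_b int2b by auto
  show "AE x in M. norm (taub x * pplus (g - taub x)) \<le> norm (\<bar>g\<bar> * \<bar>taub x\<bar> + (taub x)^2)"
  proof (rule AE_I2)
    fix x
    have "\<bar>taub x * pplus (g - taub x)\<bar> = \<bar>taub x\<bar> * pplus (g - taub x)"
      by (simp add: abs_mult pplus_def)
    also have "\<dots> \<le> \<bar>taub x\<bar> * (\<bar>g\<bar> + \<bar>taub x\<bar>)"
      by (rule mult_left_mono) (auto simp: pplus_def)
    also have "\<dots> = \<bar>g\<bar> * \<bar>taub x\<bar> + (taub x)^2" by (simp add: algebra_simps power2_eq_square)
    finally show "norm (taub x * pplus (g - taub x)) \<le> norm (\<bar>g\<bar> * \<bar>taub x\<bar> + (taub x)^2)" by simp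
  qed
qed auto

lemma int_pp: fixes g :: real shows "integrable M (\<lambda>x. (pplus (g - taub x))^2)"
proof (rule Bochner_Integration.integrable_bound[of _ "\<lambda>x. 2*g^2 + 2*(taub x)^2"])
  show "integrable M (\<lambda>x. 2*g^2 + 2*(taub x)^2)" using int2b by auto
  show "AE x in M. norm ((pplus (g - taub x))^2) \<le> norm (2*g^2 + 2*(taub x)^2)"
  proof (rule AE_I2)
    fix x
    have a: "0 \<le> pplus (g - taub x)" "pplus (g - taub x) \<le> \<bar>g\<bar> + \<bar>taub x\<bar>" by (auto simp: pplus_def)
    have "(pplus (g - taub x))^2 \<le> (\<bar>g\<bar> + \<bar>taub x\<bar>)^2" using a by (intro power_mono) auto
    also have "\<dots> \<le> 2*\<bar>g\<bar>^2 + 2*\<bar>taub x\<bar>^2" by (rule sq_bound)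
    also have "\<dots> = 2*g^2 + 2*(taub x)^2" by simp
    finally show "norm ((pplus (g - taub x))^2) \<le> norm (2*g^2 + 2*(taub x)^2)" by simp
  qed
qed auto

lemma indep_tp: fixes g :: real shows "(\<integral>x. tau x * pplus (g - taub x) \<partial>M) = (\<integral>x. tau x \<partial>M) * (\<integral>x. pplus (g - taub x) \<partial>M)"
  and int_tp: "integrable M (\<lambda>x. tau x * pplus (g - taub x))"
proof -
  have i: "indep_var borel (id \<circ> tau) borel ((\<lambda>t. pplus (g - t)) \<circ> taub)"
    by (rule indep_var_compose[OF ind]) auto
  then have i': "indep_var borel tau borel (\<lambda>x. pplus (g - taub x))" by (simp add: comp_def)
  show "(\<integral>x. tau x * pplus (g - taub x) \<partial>M) = (\<integral>x. tau x \<partial>M) * (\<integral>x. pplus (g - taub x) \<partial>M)"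
    by (rule indep_var_lebesgue_integral[OF i' int_t int_p])
  show "integrable M (\<lambda>x. tau x * pplus (g - taub x))"
    by (rule indep_var_integrable[OF i' int_t int_p])
qed

abbreviation "m \<equiv> (\<integral>x. tau x \<partial>M)"
abbreviation "s2 \<equiv> (\<integral>x. (tau x)^2 \<partial>M)"
abbreviation "P g \<equiv> (\<integral>x. pplus (g - taub x) \<partial>M)"
abbreviation "B g \<equiv> (\<integral>x. taub x * pplus (g - taub x) \<partial>M)"
abbreviation "S g \<equiv> (\<integral>x. (pplus (g - taub x))^2 \<partial>M)"

lemma EL_eq: "EL M tau taub g = P g + m"
  by (simp add: EL_def)

lemma EQ_eq: fixes g :: real shows "EQ M tau taub g = B g + m^2 + (1/2)*(S g + 2*m*P g + s2)"
proof -
  have e: "\<And>x. (pplus (g - taub x) + tau x)^2 = (pplus (g - taub x))^2 + 2*(tau x * pplus (g - taub x)) + (tau x)^2"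
    by (simp add: power2_eq_square algebra_simps)
  have "(\<integral>x. (pplus (g - taub x) + tau x)^2 \<partial>M) = S g + 2*(\<integral>x. tau x * pplus (g - taub x) \<partial>M) + s2"
    unfolding e using int_pp[of g] int_tp[of g] int2 by simp
  then show ?thesis unfolding EQ_def indep_tp by simp
qed

lemma m_pos: "m > 0"
proof -
  have "m \<ge> 0" using nn0 by (intro integral_nonneg_AE) auto
  moreover have "m \<noteq> 0"
  proof
    assume "m = 0"
    then have "AE x in M. tau x = 0" using nn0 int_t by (subst (asm) integral_nonneg_eq_0_iff_AE) auto
    then have "AE x in M. (tau x)^2 = 0" by eventually_elim simp
    then have "s2 = 0" by (subst integral_cong_AE[where g="\<lambda>x. 0"]) auto
    then show False using pos by simp
  qed
  ultimately show ?thesis by simp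
qed

lemma P_nn: "P g \<ge> 0" by (intro integral_nonneg_AE) (auto simp: pplus_def)
lemma S_nn: "S g \<ge> 0" by (intro integral_nonneg_AE) auto
lemma B_nn: "B g \<ge> 0"
  using nnb by (intro integral_nonneg_AE) (auto elim!: eventually_mono simp: pplus_def)

lemma part2: fixes g :: real shows
  "EQ M tau taub g - m * EL M tau taub g = B g + (1/2) * S g + (1/2) * s2"
  "B g + (1/2) * S g + (1/2) * s2 > 0"
proof -
  show "EQ M tau taub g - m * EL M tau taub g = B g + (1/2) * S g + (1/2) * s2"
    unfolding EQ_eq EL_eq by (simp add: algebra_simps power2_eq_square)
  show "B g + (1/2) * S g + (1/2) * s2 > 0" using B_nn[of g] S_nn[of g] pos by linarith
qed

lemma pw: fixes t g c :: real
  shows "t * pplus (g - t) + (pplus (g - t))^2/2 - c * pplus (g - t) \<ge> -((pplus (c - t))^2/2)"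
proof (cases "t \<le> g")
  case True
  note tg = True
  show ?thesis
  proof (cases "t \<le> c")
    case True
    have e: "t*(g-t) + (g-t)^2/2 - c*(g-t) + (c-t)^2/2 = (g-c)^2/2"
      by (simp add: power2_eq_square field_simps)
    have pe: "pplus (g - t) = g - t" "pplus (c - t) = c - t" using tg True by (auto simp: pplus_def)
    have "0 \<le> (g-c)^2/2" by simp
    then show ?thesis unfolding pe using e by linarith
  next
    case False
    have "0 \<le> (g-t) * ((g-t)/2 + (t - c))" using tg False by (intro mult_nonneg_nonneg) auto
    then show ?thesis using tg False by (simp add: pplus_def power2_eq_square algebra_simps)
  qed
next
  case False
  then show ?thesis by (simp add: pplus_def)
qed

lemma pw_eq: fixes t c :: real
  shows "t * pplus (c - t) + (pplus (c - t))^2/2 - c * pplus (c - t) = -((pplus (c - t))^2/2)"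
  by (simp add: pplus_def power2_eq_square algebra_simps max_def)

definition F :: "real \<Rightarrow> real" where "F c = s2/2 - c*m - S c/2"

lemma h_eq: fixes g c :: real shows
  "EQ M tau taub g - (m+c) * EL M tau taub g = (\<integral>x. taub x * pplus (g - taub x) + (pplus (g - taub x))^2/2 - c * pplus (g - taub x) \<partial>M) + s2/2 - c*m"
proof -
  have "(\<integral>x. taub x * pplus (g - taub x) + (pplus (g - taub x))^2/2 - c * pplus (g - taub x) \<partial>M)
     = B g + S g / 2 - c * P g"
    using int_bp[of g] int_pp[of g] int_p[of g] by simp
  then show ?thesis unfolding EQ_eq EL_eq by (simp add: algebra_simps power2_eq_square)
qed

lemma h_ge: fixes g c :: real shows "EQ M tau taub g - (m+c) * EL M tau taub g \<ge> F c"
proof -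
  have "(\<integral>x. -((pplus (c - taub x))^2/2) \<partial>M) \<le> (\<integral>x. taub x * pplus (g - taub x) + (pplus (g - taub x))^2/2 - c * pplus (g - taub x) \<partial>M)"
    using int_bp[of g] int_pp[of g] int_p[of g] int_pp[of c] by (intro integral_mono pw) auto
  then show ?thesis unfolding h_eq F_def using int_pp[of c] by simp
qed

lemma h_eq_at: fixes c :: real shows "EQ M tau taub c - (m+c) * EL M tau taub c = F c"
  unfolding h_eq F_def pw_eq using int_pp[of c] by simp

lemma pw_lip: fixes c d t :: real assumes "t \<ge> 0"
  shows "\<bar>(pplus (c - t))^2 - (pplus (d - t))^2\<bar> \<le> \<bar>c-d\<bar> * (\<bar>c\<bar> + \<bar>d\<bar>)"
proof -
  define x where "x = pplus (c - t)"
  define y where "y = pplus (d - t)"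
  have x: "0 \<le> x" "x \<le> \<bar>c\<bar>" using assms by (auto simp: x_def pplus_def)
  have y: "0 \<le> y" "y \<le> \<bar>d\<bar>" using assms by (auto simp: y_def pplus_def)
  have xy: "\<bar>x - y\<bar> \<le> \<bar>c - d\<bar>" by (auto simp: x_def y_def pplus_def)
  have e: "x^2 - y^2 = (x-y)*(x+y)" by (simp add: power2_eq_square algebra_simps)
  have "\<bar>x^2 - y^2\<bar> = \<bar>x - y\<bar> * (x + y)" using x y unfolding e by (simp add: abs_mult)
  also have "\<dots> \<le> \<bar>c-d\<bar> * (\<bar>c\<bar> + \<bar>d\<bar>)" using x y xy by (intro mult_mono) auto
  finally show ?thesis by (simp add: x_def y_def)
qed

lemma S_lip: fixes c d :: real shows "\<bar>S c - S d\<bar> \<le> \<bar>c-d\<bar> * (\<bar>c\<bar> + \<bar>d\<bar>)"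
proof -
  have "S c - S d = (\<integral>x. (pplus (c - taub x))^2 - (pplus (d - taub x))^2 \<partial>M)"
    using int_pp[of c] int_pp[of d] by simp
  then have "\<bar>S c - S d\<bar> \<le> (\<integral>x. \<bar>(pplus (c - taub x))^2 - (pplus (d - taub x))^2\<bar> \<partial>M)"
    by simp
  also have "\<dots> \<le> (\<integral>x. \<bar>c-d\<bar> * (\<bar>c\<bar> + \<bar>d\<bar>) \<partial>M)"
    using nnb int_pp[of c] int_pp[of d]
    by (intro integral_mono_AE) (auto elim!: eventually_mono intro: pw_lip)
  also have "\<dots> = \<bar>c-d\<bar> * (\<bar>c\<bar> + \<bar>d\<bar>)" by (simp add: prob_space)
  finally show ?thesis .
qed

lemma F_cont: "continuous_on {0..K} F"
proof (rule lipschitz_on_continuous_on)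
  show "(2*\<bar>K\<bar>/2 + m)-lipschitz_on {0..K} F"
  proof (rule lipschitz_onI)
    fix x y assume xy: "x \<in> {0..K}" "y \<in> {0..K}"
    have "\<bar>S x - S y\<bar> \<le> \<bar>x-y\<bar> * (\<bar>x\<bar> + \<bar>y\<bar>)" by (rule S_lip)
    also have "\<dots> \<le> \<bar>x-y\<bar> * (2*\<bar>K\<bar>)" using xy by (intro mult_left_mono) auto
    finally have 1: "\<bar>S x - S y\<bar> \<le> \<bar>x-y\<bar> * (2*\<bar>K\<bar>)" .
    have "F x - F y = (y - x)*m + (S y - S x)/2" by (simp add: F_def field_simps)
    moreover have "\<bar>(y - x)*m\<bar> = \<bar>x-y\<bar>*m" using m_pos by (simp add: abs_mult abs_minus_commute)
    moreover have "\<bar>(S y - S x)/2\<bar> = \<bar>S x - S y\<bar>/2" by (simp add: abs_minus_commute)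
    ultimately have "\<bar>F x - F y\<bar> \<le> \<bar>x-y\<bar>*m + \<bar>S x - S y\<bar>/2"
      by (metis abs_triangle_ineq)
    also have "\<dots> \<le> \<bar>x-y\<bar>*m + \<bar>x-y\<bar> * (2*\<bar>K\<bar>)/2" using 1 by simp
    finally show "dist (F x) (F y) \<le> (2*\<bar>K\<bar>/2 + m) * dist x y"
      by (simp add: dist_real_def algebra_simps)
  qed (use m_pos in auto)
qed

lemma S_mono: fixes c d :: real assumes "c \<le> d" shows "S c \<le> S d"
  using int_pp[of c] int_pp[of d] assms
  by (intro integral_mono power_mono) (auto simp: pplus_def)

lemma S0: "S 0 = 0"
proof -
  have "AE x in M. (pplus (0 - taub x))^2 = 0" using nnb by eventually_elim (auto simp: pplus_def)
  then show ?thesis by (subst integral_cong_AE[where g="\<lambda>x. 0"]) auto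
qed

lemma F_strict: fixes c d :: real assumes "c < d" shows "F d < F c"
proof -
  have "c*m < d*m" using assms m_pos by simp
  then show ?thesis using S_mono[of c d] assms unfolding F_def by linarith
qed

lemma h_bdd: "bdd_below ((\<lambda>g. EQ M tau taub g - eta * EL M tau taub g) ` {0..})"
  using h_ge[where c="eta - m"] by (intro bdd_belowI[of _ "F (eta - m)"]) auto

lemma q_ge_m: assumes "eta \<ge> m" shows "qfun M tau taub eta = F (eta - m)"
proof -
  let ?h = "\<lambda>g. EQ M tau taub g - eta * EL M tau taub g"
  have "qfun M tau taub eta \<le> ?h (eta - m)"
    unfolding qfun_def using assms by (intro cINF_lower h_bdd) auto
  also have "?h (eta - m) = F (eta - m)" using h_eq_at[of "eta - m"] by simp
  finally have 1: "qfun M tau taub eta \<le> F (eta - m)" .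
  have "F (eta - m) \<le> qfun M tau taub eta"
    unfolding qfun_def using h_ge[where c="eta - m"] by (intro cINF_greatest) auto
  with 1 show ?thesis by simp
qed

lemma q_le_m: assumes "eta \<le> m" shows "qfun M tau taub eta \<ge> s2/2"
  unfolding qfun_def
proof (intro cINF_greatest)
  fix g :: real assume "g \<in> {0..}"
  have "EQ M tau taub g - eta * EL M tau taub g = (EQ M tau taub g - m * EL M tau taub g) + (m - eta) * EL M tau taub g"
    by (simp add: algebra_simps)
  also have "\<dots> = B g + (1/2) * S g + (1/2) * s2 + (m - eta) * (P g + m)" using part2(1) EL_eq by simp
  also have "\<dots> \<ge> s2/2"
  proof -
    have "0 \<le> (m - eta) * (P g + m)" using P_nn[of g] m_pos assms by (intro mult_nonneg_nonneg) auto
    then show ?thesis using B_nn[of g] S_nn[of g] by linarith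
  qed
  finally show "s2/2 \<le> EQ M tau taub g - eta * EL M tau taub g" .
qed auto

lemma interval_prob: fixes X :: "'a \<Rightarrow> real" assumes [measurable]: "X \<in> borel_measurable M" and "a \<le> b"
  shows "measure M {x\<in>space M. X x \<in> {a<..b}} = measure M {x\<in>space M. X x \<le> b} - measure M {x\<in>space M. X x \<le> a}"
proof -
  have "{x\<in>space M. X x \<in> {a<..b}} = {x\<in>space M. X x \<le> b} - {x\<in>space M. X x \<le> a}" by auto
  moreover have "measure M ({x\<in>space M. X x \<le> b} - {x\<in>space M. X x \<le> a}) = measure M {x\<in>space M. X x \<le> b} - measure M {x\<in>space M. X x \<le> a}"
    using assms by (intro finite_measure_Diff) auto
  ultimately show ?thesis by simp
qed

lemma deriv_gen:
  fixes X :: "'a \<Rightarrow> real" and f :: "real \<Rightarrow> real \<Rightarrow> real" and D :: "real \<Rightarrow> real" and g C :: real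
  assumes [measurable]: "X \<in> borel_measurable M"
    and intf: "\<And>y. integrable M (\<lambda>x. f y (X x))"
    and intD: "integrable M (\<lambda>x. D (X x))"
    and C: "C \<ge> 0"
    and bnd: "AE x in M. \<forall>h. \<bar>f (g+h) (X x) - f g (X x) - h * D (X x)\<bar> \<le> C * \<bar>h\<bar> * (\<bar>h\<bar> + indicator {g - 2*\<bar>h\<bar> <.. g + \<bar>h\<bar>} (X x))"
    and cont: "isCont (\<lambda>s. measure M {x\<in>space M. X x \<le> s}) g"
  shows "((\<lambda>y. \<integral>x. f y (X x) \<partial>M) has_real_derivative (\<integral>x. D (X x) \<partial>M)) (at g)"
proof -
  define Fx where "Fx s = measure M {x\<in>space M. X x \<le> s}" for s
  define G where "G y = C * \<bar>y - g\<bar> + C * (Fx (g + \<bar>y - g\<bar>) - Fx (g - 2*\<bar>y - g\<bar>))" for y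
  have intW: "integrable M (\<lambda>x. indicator {g - 2*\<bar>h\<bar> <.. g + \<bar>h\<bar>} (X x) :: real)" for h
    by (rule integrable_const_bound[where B=1]) (auto simp: indicator_def)
  have EW: "(\<integral>x. indicator {g - 2*\<bar>h\<bar> <.. g + \<bar>h\<bar>} (X x) \<partial>M) = Fx (g + \<bar>h\<bar>) - Fx (g - 2*\<bar>h\<bar>)" for h
  proof -
    let ?A = "{x\<in>space M. X x \<in> {g - 2*\<bar>h\<bar> <.. g + \<bar>h\<bar>}}"
    have "(\<integral>x. indicator {g - 2*\<bar>h\<bar> <.. g + \<bar>h\<bar>} (X x) \<partial>M) = (\<integral>x. indicator ?A x \<partial>M)"
      by (intro Bochner_Integration.integral_cong) (auto simp: indicator_def)
    also have "\<dots> = measure M ?A" by (simp add: Int_absorb2)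
    also have "\<dots> = Fx (g + \<bar>h\<bar>) - Fx (g - 2*\<bar>h\<bar>)"
      unfolding Fx_def by (rule interval_prob) auto
    finally show ?thesis .
  qed
  have lim: "(G \<longlongrightarrow> 0) (at g)"
  proof -
    have t1': "((\<lambda>y. g + \<bar>y - g\<bar>) \<longlongrightarrow> g + \<bar>g - g\<bar>) (at g)"
      by (intro tendsto_intros)
    have t1: "((\<lambda>y. g + \<bar>y - g\<bar>) \<longlongrightarrow> g) (at g)" using t1' by simp
    have t2': "((\<lambda>y. g - 2*\<bar>y - g\<bar>) \<longlongrightarrow> g - 2*\<bar>g - g\<bar>) (at g)"
      by (intro tendsto_intros)
    have t2: "((\<lambda>y. g - 2*\<bar>y - g\<bar>) \<longlongrightarrow> g) (at g)" using t2' by simp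
    have t3': "((\<lambda>y. \<bar>y - g\<bar>) \<longlongrightarrow> \<bar>g - g\<bar>) (at g)"
      by (intro tendsto_intros)
    have t3: "((\<lambda>y. \<bar>y - g\<bar>) \<longlongrightarrow> 0) (at g)" using t3' by simp
    have c: "isCont Fx g" using cont unfolding Fx_def[abs_def] .
    have "(G \<longlongrightarrow> C * 0 + C * (Fx g - Fx g)) (at g)"
      unfolding G_def
      by (intro tendsto_intros isCont_tendsto_compose[OF c t1] isCont_tendsto_compose[OF c t2] t3)
    then show ?thesis by simp
  qed
  have ev: "eventually (\<lambda>y. norm (((\<integral>x. f y (X x) \<partial>M) - (\<integral>x. f g (X x) \<partial>M)) / (y - g) - (\<integral>x. D (X x) \<partial>M)) \<le> G y) (at g)"
  proof -
  have "norm (((\<integral>x. f y (X x) \<partial>M) - (\<integral>x. f g (X x) \<partial>M)) / (y - g) - (\<integral>x. D (X x) \<partial>M)) \<le> G y"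
    if "y \<noteq> g" for y
  proof -
    define h where "h = y - g"
    have h0: "\<bar>h\<bar> > 0" using \<open>y \<noteq> g\<close> by (simp add: h_def)
    have yh: "y = g + h" by (simp add: h_def)
    have "((\<integral>x. f y (X x) \<partial>M) - (\<integral>x. f g (X x) \<partial>M)) / (y - g) - (\<integral>x. D (X x) \<partial>M)
        = (\<integral>x. f (g+h) (X x) - f g (X x) - h * D (X x) \<partial>M) / h"
      using intf[of y] intf[of g] intD h0 by (simp add: yh field_simps)
    then have "norm (((\<integral>x. f y (X x) \<partial>M) - (\<integral>x. f g (X x) \<partial>M)) / (y - g) - (\<integral>x. D (X x) \<partial>M))
        = \<bar>\<integral>x. f (g+h) (X x) - f g (X x) - h * D (X x) \<partial>M\<bar> / \<bar>h\<bar>" by simp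
    also have "\<dots> \<le> (\<integral>x. C * \<bar>h\<bar> * (\<bar>h\<bar> + indicator {g - 2*\<bar>h\<bar> <.. g + \<bar>h\<bar>} (X x)) \<partial>M) / \<bar>h\<bar>"
    proof (intro divide_right_mono)
      have "\<bar>\<integral>x. f (g+h) (X x) - f g (X x) - h * D (X x) \<partial>M\<bar> \<le> (\<integral>x. \<bar>f (g+h) (X x) - f g (X x) - h * D (X x)\<bar> \<partial>M)"
        by simp
      also have "\<dots> \<le> (\<integral>x. C * \<bar>h\<bar> * (\<bar>h\<bar> + indicator {g - 2*\<bar>h\<bar> <.. g + \<bar>h\<bar>} (X x)) \<partial>M)"
        using bnd intf[of "g+h"] intf[of g] intD intW[of h]
        by (intro integral_mono_AE) (auto elim!: eventually_mono)
      finally show "\<bar>\<integral>x. f (g+h) (X x) - f g (X x) - h * D (X x) \<partial>M\<bar> \<le> (\<integral>x. C * \<bar>h\<bar> * (\<bar>h\<bar> + indicator {g - 2*\<bar>h\<bar> <.. g + \<bar>h\<bar>} (X x)) \<partial>M)" .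
    qed simp
    also have "\<dots> = C * (\<bar>h\<bar> + (Fx (g + \<bar>h\<bar>) - Fx (g - 2*\<bar>h\<bar>)))"
      using intW[of h] h0 by (simp add: EW prob_space)
    also have "\<dots> = G y" by (simp add: G_def h_def algebra_simps)
    finally show ?thesis .
  qed
  then show ?thesis unfolding eventually_at_filter by (intro always_eventually) auto
  qed
  have "((\<lambda>y. ((\<integral>x. f y (X x) \<partial>M) - (\<integral>x. f g (X x) \<partial>M)) / (y - g) - (\<integral>x. D (X x) \<partial>M)) \<longlongrightarrow> 0) (at g)"
    by (rule Lim_null_comparison[OF ev lim])
  then show ?thesis
    unfolding has_field_derivative_iff by (simp add: LIM_zero_iff)
qed

lemma pa: fixes g h t :: real
  shows "\<bar>pplus (g+h-t) - pplus (g-t) - h * indicator {..g} t\<bar> \<le> 2*\<bar>h\<bar> * indicator {g - 2*\<bar>h\<bar> <.. g + \<bar>h\<bar>} t"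
  by (auto simp: pplus_def indicator_def max_def abs_if)

lemma pb: fixes g h t :: real
  shows "\<bar>t * pplus (g+h-t) - t * pplus (g-t) - h * (t * indicator {..g} t)\<bar> \<le> (2*\<bar>g\<bar>+4) * \<bar>h\<bar> * (\<bar>h\<bar> + indicator {g - 2*\<bar>h\<bar> <.. g + \<bar>h\<bar>} t)"
proof -
  let ?W = "indicator {g - 2*\<bar>h\<bar> <.. g + \<bar>h\<bar>} t :: real"
  have e: "t * pplus (g+h-t) - t * pplus (g-t) - h * (t * indicator {..g} t) = t * (pplus (g+h-t) - pplus (g-t) - h * indicator {..g} t)"
    by (simp add: algebra_simps)
  have "\<bar>t\<bar> * ?W \<le> (\<bar>g\<bar> + 2) * (\<bar>h\<bar> + ?W)"
  proof (cases "t \<in> {g - 2*\<bar>h\<bar> <.. g + \<bar>h\<bar>}")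
    case True
    then have 1: "\<bar>t\<bar> \<le> \<bar>g\<bar> + 2*\<bar>h\<bar>" by auto
    have 2: "0 \<le> \<bar>g\<bar>*\<bar>h\<bar>" by simp
    have 3: "\<bar>t\<bar> * ?W = \<bar>t\<bar>" using True by simp
    have 4: "(\<bar>g\<bar> + 2) * (\<bar>h\<bar> + ?W) = \<bar>g\<bar>*\<bar>h\<bar> + \<bar>g\<bar> + 2*\<bar>h\<bar> + 2" using True by (simp add: algebra_simps)
    show ?thesis unfolding 3 4 using 1 2 by linarith
  next
    case False
    then show ?thesis by simp
  qed
  have "\<bar>t * (pplus (g+h-t) - pplus (g-t) - h * indicator {..g} t)\<bar> \<le> \<bar>t\<bar> * (2*\<bar>h\<bar> * ?W)"
    unfolding abs_mult by (intro mult_left_mono pa) auto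
  also have "\<dots> = 2*\<bar>h\<bar> * (\<bar>t\<bar> * ?W)" by simp
  also have "\<dots> \<le> 2*\<bar>h\<bar> * ((\<bar>g\<bar> + 2) * (\<bar>h\<bar> + ?W))"
    by (intro mult_left_mono \<open>\<bar>t\<bar> * ?W \<le> _\<close>) auto
  finally show ?thesis unfolding e by (simp add: algebra_simps)
qed

lemma pc: fixes g h t :: real
  shows "\<bar>(pplus (g+h-t))^2/2 - (pplus (g-t))^2/2 - h * pplus (g-t)\<bar> \<le> h^2/2"
proof -
  define u where "u = g - t"
  have e: "g+h-t = u+h" by (simp add: u_def)
  have "\<bar>(pplus (u+h))^2/2 - (pplus u)^2/2 - h * pplus u\<bar> \<le> h^2/2 \<Longrightarrow> ?thesis"
    unfolding e u_def .
  moreover have "\<bar>(pplus (u+h))^2/2 - (pplus u)^2/2 - h * pplus u\<bar> \<le> h^2/2"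
  proof (cases "u \<ge> 0")
    case True
    show ?thesis
    proof (cases "u + h \<ge> 0")
      case True
      have e2: "(u+h)^2/2 - u^2/2 - h*u = h^2/2" by (simp add: power2_eq_square field_simps)
      have pe: "pplus (u+h) = u+h" "pplus u = u" using True \<open>u \<ge> 0\<close> by (auto simp: pplus_def)
      show ?thesis unfolding pe e2 by simp
    next
      case False
      have e: "h^2/2 - \<bar>- (u^2/2) - h*u\<bar> = (u+h)^2/2" using False \<open>u \<ge> 0\<close>
      proof -
        have "- (u^2/2) - h*u = u * (-(u+h) + u/2)" by (simp add: power2_eq_square field_simps)
        moreover have "u * (-(u+h) + u/2) \<ge> 0" using False \<open>u \<ge> 0\<close> by (intro mult_nonneg_nonneg) auto
        ultimately have "\<bar>- (u^2/2) - h*u\<bar> = - (u^2/2) - h*u" by simp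
        then show ?thesis by (simp add: power2_eq_square field_simps)
      qed
      have z: "0 \<le> (u+h)^2/2" by simp
      have pe: "pplus (u+h) = 0" "pplus u = u" using False \<open>u \<ge> 0\<close> by (auto simp: pplus_def)
      have "\<bar>- (u^2/2) - h*u\<bar> \<le> h^2/2" using e z by linarith
      then show ?thesis unfolding pe by simp
    qed
  next
    case False
    show ?thesis
    proof (cases "u + h \<ge> 0")
      case True
      have "(u+h)^2 \<le> h^2" using True False by (intro power_mono) auto
      then show ?thesis using True False by (simp add: pplus_def)
    next
      case False
      then show ?thesis using \<open>\<not> u \<ge> 0\<close> by (simp add: pplus_def)
    qed
  qed
  ultimately show ?thesis by blast
qed

lemma ind_int: fixes X :: "'a \<Rightarrow> real" assumes [measurable]: "X \<in> borel_measurable M"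
  shows "(\<integral>x. indicator {..g} (X x) \<partial>M) = measure M {x\<in>space M. X x \<le> g}"
proof -
  have "(\<integral>x. indicator {..g} (X x) \<partial>M) = (\<integral>x. indicator {x\<in>space M. X x \<le> g} x \<partial>M)"
    by (intro Bochner_Integration.integral_cong) (auto simp: indicator_def)
  also have "\<dots> = measure M {x\<in>space M. X x \<le> g}" by (simp add: Int_absorb2)
  finally show ?thesis .
qed

lemma int_ind: "integrable M (\<lambda>x. indicator {..g} (taub x) :: real)"
  by (rule integrable_const_bound[where B=1]) (auto simp: indicator_def)

lemma int_bind: "integrable M (\<lambda>x. taub x * indicator {..g} (taub x) :: real)"
proof (rule Bochner_Integration.integrable_bound[of _ "\<lambda>x. taub x"])
  show "integrable M taub" by (rule int_b)
qed (auto simp: indicator_def)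

lemma dP: assumes "isCont (\<lambda>s. measure M {x\<in>space M. taub x \<le> s}) g"
  shows "((\<lambda>y. P y) has_real_derivative measure M {x\<in>space M. taub x \<le> g}) (at g)"
proof -
  have "((\<lambda>y. \<integral>x. pplus (y - taub x) \<partial>M) has_real_derivative (\<integral>x. indicator {..g} (taub x) \<partial>M)) (at g)"
  proof (rule deriv_gen[where X=taub and f="\<lambda>y t. pplus (y - t)" and D="\<lambda>t. indicator {..g} t" and C=2])
    show "AE x in M. \<forall>h. \<bar>pplus (g + h - taub x) - pplus (g - taub x) - h * indicator {..g} (taub x)\<bar>
           \<le> 2 * \<bar>h\<bar> * (\<bar>h\<bar> + indicator {g - 2 * \<bar>h\<bar><..g + \<bar>h\<bar>} (taub x))"
    proof (intro AE_I2 allI)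
      fix x h
      have "\<bar>pplus (g + h - taub x) - pplus (g - taub x) - h * indicator {..g} (taub x)\<bar> \<le> 2*\<bar>h\<bar> * indicator {g - 2 * \<bar>h\<bar><..g + \<bar>h\<bar>} (taub x)"
        by (rule pa)
      also have "\<dots> \<le> 2 * \<bar>h\<bar> * (\<bar>h\<bar> + indicator {g - 2 * \<bar>h\<bar><..g + \<bar>h\<bar>} (taub x))"
        by (intro mult_left_mono) auto
      finally show "\<bar>pplus (g + h - taub x) - pplus (g - taub x) - h * indicator {..g} (taub x)\<bar>
           \<le> 2 * \<bar>h\<bar> * (\<bar>h\<bar> + indicator {g - 2 * \<bar>h\<bar><..g + \<bar>h\<bar>} (taub x))" .
    qed
  qed (use assms int_p int_ind in auto)
  then show ?thesis by (simp add: ind_int)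
qed

lemma dB: assumes "isCont (\<lambda>s. measure M {x\<in>space M. taub x \<le> s}) g"
  shows "((\<lambda>y. B y) has_real_derivative (\<integral>x. taub x * indicator {..g} (taub x) \<partial>M)) (at g)"
proof (rule deriv_gen[where X=taub and f="\<lambda>y t. t * pplus (y - t)" and D="\<lambda>t. t * indicator {..g} t" and C="2*\<bar>g\<bar>+4"])
  show "AE x in M. \<forall>h. \<bar>taub x * pplus (g + h - taub x) - taub x * pplus (g - taub x) - h * (taub x * indicator {..g} (taub x))\<bar>
           \<le> (2*\<bar>g\<bar>+4) * \<bar>h\<bar> * (\<bar>h\<bar> + indicator {g - 2 * \<bar>h\<bar><..g + \<bar>h\<bar>} (taub x))"
    by (intro AE_I2 allI pb)
qed (use assms int_bp int_bind in auto)

lemma dS: assumes "isCont (\<lambda>s. measure M {x\<in>space M. taub x \<le> s}) g"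
  shows "((\<lambda>y. \<integral>x. (pplus (y - taub x))^2/2 \<partial>M) has_real_derivative P g) (at g)"
proof (rule deriv_gen[where X=taub and f="\<lambda>y t. (pplus (y - t))^2/2" and D="\<lambda>t. pplus (g - t)" and C="1/2"])
  show "AE x in M. \<forall>h. \<bar>(pplus (g + h - taub x))^2/2 - (pplus (g - taub x))^2/2 - h * pplus (g - taub x)\<bar>
           \<le> 1/2 * \<bar>h\<bar> * (\<bar>h\<bar> + indicator {g - 2 * \<bar>h\<bar><..g + \<bar>h\<bar>} (taub x))"
  proof (intro AE_I2 allI)
    fix x h
    have "\<bar>(pplus (g + h - taub x))^2/2 - (pplus (g - taub x))^2/2 - h * pplus (g - taub x)\<bar> \<le> h^2/2"
      by (rule pc)
    also have "h^2/2 = 1/2 * \<bar>h\<bar> * \<bar>h\<bar>" by (simp add: power2_eq_square abs_mult_self)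
    also have "\<dots> \<le> 1/2 * \<bar>h\<bar> * (\<bar>h\<bar> + indicator {g - 2 * \<bar>h\<bar><..g + \<bar>h\<bar>} (taub x))"
      by (intro mult_left_mono) auto
    finally show "\<bar>(pplus (g + h - taub x))^2/2 - (pplus (g - taub x))^2/2 - h * pplus (g - taub x)\<bar>
           \<le> 1/2 * \<bar>h\<bar> * (\<bar>h\<bar> + indicator {g - 2 * \<bar>h\<bar><..g + \<bar>h\<bar>} (taub x))" .
  qed
qed (use assms int_pp int_p in auto)

lemma EQ_fun: "EQ M tau taub = (\<lambda>y. B y + m^2 + ((\<integral>x. (pplus (y - taub x))^2/2 \<partial>M) + m * P y + s2/2))"
  by (rule ext) (simp add: EQ_eq algebra_simps)

lemma part1:
  assumes "isCont (\<lambda>s. measure M {x\<in>space M. tau x \<le> s}) g"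
  shows "(EQ M tau taub has_real_derivative ((g + m) * measure M {x\<in>space M. tau x \<le> g})) (at g)"
    and "(EL M tau taub has_real_derivative (measure M {x\<in>space M. tau x \<le> g})) (at g)"
proof -
  have c: "isCont (\<lambda>s. measure M {x\<in>space M. taub x \<le> s}) g" using assms by (simp add: cdf_eq)
  let ?F = "measure M {x\<in>space M. taub x \<le> g}"
  have d: "(EQ M tau taub has_real_derivative ((\<integral>x. taub x * indicator {..g} (taub x) \<partial>M) + 0 + (P g + m * ?F + 0))) (at g)"
    unfolding EQ_fun by (intro DERIV_add DERIV_const DERIV_cmult dB[OF c] dS[OF c] dP[OF c])
  have sm: "(\<integral>x. taub x * indicator {..g} (taub x) \<partial>M) + P g = g * ?F"
  proof -
    have "(\<integral>x. taub x * indicator {..g} (taub x) \<partial>M) + P g = (\<integral>x. taub x * indicator {..g} (taub x) + pplus (g - taub x) \<partial>M)"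
      using int_bind int_p by simp
    also have "\<dots> = (\<integral>x. g * indicator {..g} (taub x) \<partial>M)"
      by (intro Bochner_Integration.integral_cong) (auto simp: indicator_def pplus_def)
    also have "\<dots> = g * ?F" by (simp add: ind_int)
    finally show ?thesis .
  qed
  have e: "(\<integral>x. taub x * indicator {..g} (taub x) \<partial>M) + 0 + (P g + m * ?F + 0) = (g + m) * measure M {x\<in>space M. tau x \<le> g}"
    using sm unfolding cdf_eq distrib_right by linarith
  from d show "(EQ M tau taub has_real_derivative ((g + m) * measure M {x\<in>space M. tau x \<le> g})) (at g)"
    unfolding e .
  have "(EL M tau taub has_real_derivative (?F + 0)) (at g)"
    unfolding EL_def by (intro DERIV_add DERIV_const dP[OF c])
  then show "(EL M tau taub has_real_derivative (measure M {x\<in>space M. tau x \<le> g})) (at g)"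
    by (simp add: cdf_eq)
qed

end

theorem mainTheorem3:
  fixes M :: "'a measure" and tau taub :: "'a \<Rightarrow> real"
  assumes "prob_space M"
    and "tau \<in> borel_measurable M" and "taub \<in> borel_measurable M"
    and "prob_space.indep_var M borel tau borel taub"
    and "distr M borel tau = distr M borel taub"
    and "AE x in M. tau x \<ge> 0" and "AE x in M. taub x \<ge> 0"
    and "integrable M (\<lambda>x. (tau x)^2)"
    and "(\<integral>x. (tau x)^2 \<partial>M) > 0"
  shows
    "(\<forall>g::real. g \<ge> 0 \<longrightarrow>
        isCont (\<lambda>s. measure M {x \<in> space M. tau x \<le> s}) g \<longrightarrow>
          ((EQ M tau taub) has_real_derivative
              ((g + (\<integral>x. tau x \<partial>M)) * measure M {x \<in> space M. tau x \<le> g})) (at g within {0..})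
        \<and> ((EL M tau taub) has_real_derivative
              (measure M {x \<in> space M. tau x \<le> g})) (at g within {0..}))
   \<and> (\<forall>g::real. g \<ge> 0 \<longrightarrow>
        EQ M tau taub g - (\<integral>x. tau x \<partial>M) * EL M tau taub g
          = (\<integral>x. taub x * pplus (g - taub x) \<partial>M) + (1/2) * (\<integral>x. (pplus (g - taub x))^2 \<partial>M)
            + (1/2) * (\<integral>x. (tau x)^2 \<partial>M)
        \<and> (\<integral>x. taub x * pplus (g - taub x) \<partial>M) + (1/2) * (\<integral>x. (pplus (g - taub x))^2 \<partial>M)
            + (1/2) * (\<integral>x. (tau x)^2 \<partial>M) > 0)
   \<and> qfun M tau taub (\<integral>x. tau x \<partial>M) > 0
   \<and> (\<exists>!eta. eta \<ge> 0 \<and> qfun M tau taub eta = 0)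
   \<and> (\<forall>eta. eta \<ge> 0 \<and> qfun M tau taub eta = 0 \<longrightarrow>
        eta > (\<integral>x. tau x \<partial>M)
        \<and> eta - (\<integral>x. tau x \<partial>M) > 0
        \<and> (\<forall>g::real. g \<ge> 0 \<longrightarrow>
             EQ M tau taub (eta - (\<integral>x. tau x \<partial>M)) / EL M tau taub (eta - (\<integral>x. tau x \<partial>M))
               \<le> EQ M tau taub g / EL M tau taub g))"
proof -
  have A: "aoi M tau taub" unfolding aoi_def aoi_axioms_def using assms by auto
  interpret aoi M tau taub by (rule A)
  have P1: "\<forall>g::real. g \<ge> 0 \<longrightarrow>
        isCont (\<lambda>s. measure M {x \<in> space M. tau x \<le> s}) g \<longrightarrow>
          ((EQ M tau taub) has_real_derivative
              ((g + m) * measure M {x \<in> space M. tau x \<le> g})) (at g within {0..})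
        \<and> ((EL M tau taub) has_real_derivative
              (measure M {x \<in> space M. tau x \<le> g})) (at g within {0..})"
    using part1 by (auto intro: has_field_derivative_at_within)
  have P2: "\<forall>g::real. g \<ge> 0 \<longrightarrow>
        EQ M tau taub g - m * EL M tau taub g = B g + (1/2) * S g + (1/2) * s2
        \<and> B g + (1/2) * S g + (1/2) * s2 > 0"
    using part2 by auto
  have s2pos: "s2 > 0" by (rule pos)
  have P3: "qfun M tau taub m > 0" using q_le_m[of m] s2pos by simp
  have zero_gt: "eta > m" if "eta \<ge> 0" "qfun M tau taub eta = 0" for eta
  proof (rule ccontr)
    assume "\<not> eta > m"
    then have "qfun M tau taub eta \<ge> s2/2" by (intro q_le_m) simp
    with that s2pos show False by simp
  qed
  have P4: "\<exists>!eta. eta \<ge> 0 \<and> qfun M tau taub eta = 0"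
  proof -
    define K where "K = s2 / m"
    have K0: "0 \<le> K" using m_pos s2pos by (simp add: K_def)
    have "F K \<le> 0"
    proof -
      have "K * m = s2" using m_pos by (simp add: K_def)
      then show ?thesis using S_nn[of K] s2pos unfolding F_def by linarith
    qed
    moreover have "0 \<le> F 0" using s2pos unfolding F_def S0 by simp
    ultimately obtain c where c: "0 \<le> c" "c \<le> K" "F c = 0"
      using IVT2'[of F K 0 0] F_cont[of K] K0 by auto
    have ex: "m + c \<ge> 0 \<and> qfun M tau taub (m + c) = 0"
      using c m_pos q_ge_m[of "m + c"] by simp
    show ?thesis
    proof (rule ex1I[of _ "m + c"])
      show "m + c \<ge> 0 \<and> qfun M tau taub (m + c) = 0" by (rule ex)
      fix eta assume e: "eta \<ge> 0 \<and> qfun M tau taub eta = 0"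
      then have "eta > m" using zero_gt by auto
      then have "F (eta - m) = 0" using q_ge_m[of eta] e by simp
      show "eta = m + c"
      proof (rule ccontr)
        assume "eta \<noteq> m + c"
        then have "eta - m < c \<or> c < eta - m" by auto
        then show False using F_strict[of "eta - m" c] F_strict[of c "eta - m"] \<open>F (eta - m) = 0\<close> c(3) by auto
      qed
    qed
  qed
  have P5: "\<forall>eta. eta \<ge> 0 \<and> qfun M tau taub eta = 0 \<longrightarrow>
        eta > m \<and> eta - m > 0
        \<and> (\<forall>g::real. g \<ge> 0 \<longrightarrow>
             EQ M tau taub (eta - m) / EL M tau taub (eta - m) \<le> EQ M tau taub g / EL M tau taub g)"
  proof (intro allI impI conjI)
    fix eta assume e: "eta \<ge> 0 \<and> qfun M tau taub eta = 0"
    then show gt: "eta > m" using zero_gt by auto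
    then show "eta - m > 0" by simp
    have F0: "F (eta - m) = 0" using q_ge_m[of eta] e gt by simp
    have ELpos: "EL M tau taub y > 0" for y using P_nn[of y] m_pos by (simp add: EL_eq)
    have at: "EQ M tau taub (eta - m) - eta * EL M tau taub (eta - m) = 0"
      using h_eq_at[of "eta - m"] F0 by simp
    then have r: "EQ M tau taub (eta - m) / EL M tau taub (eta - m) = eta"
      using ELpos[of "eta - m"] by (simp add: field_simps)
    fix g :: real assume "g \<ge> 0"
    have "EQ M tau taub g - eta * EL M tau taub g \<ge> 0"
      using h_ge[where g=g and c="eta - m"] F0 by simp
    then have "eta \<le> EQ M tau taub g / EL M tau taub g"
      using ELpos[of g] by (simp add: field_simps)
    then show "EQ M tau taub (eta - m) / EL M tau taub (eta - m) \<le> EQ M tau taub g / EL M tau taub g"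
      unfolding r .
  qed
  show ?thesis using P1 P2 P3 P4 P5 by blast
qed

end
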